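(* Let $m\geqslant 1$ and $n\geqslant 0$ be integers. Consider the $n$-dimensional corner preference parking problem with $L=2m$ and $\ell=m$, and let $Y_n$ be the number of cars parked after the first car at the time of saturation (with $Y_0=0$). Then for every $n\geqslant 1$, \[ \mathbb{E}(u^{Y_n}) = u \sum_{1\leqslant k\leqslant n} \binom{n}{k}\frac{m^k-(m-1)^k}{(m+1)^n-m^n}\, \mathbb{E}\bigl(u^{Y_{n-k}}\bigr). \]
   Context: Corner preference parking problem: cars are integral translates of the cube $[0,m]^n$ inside $[0,2m]^n$, each represented by its corner closest to the origin, i.e. by a point of $Z_m^n:=\{\mathbf{a}=(a_1,\dots,a_n): a_j\in\{0,1,\dots,m\}\}$. Let $\rho(\mathbf{x},\mathbf{y}):=\max_{1\leqslant j\leqslant n}|x_j-y_j|$. For $\mathbf{a}\in Z_m^n$ let $S(\mathbf{a}):=\{\mathbf{x}\in Z_m^n: 0\leqslant x_j\leqslant a_j,\ j=1,\dots,n\}$, $U(\mathbf{a},m):=\{\mathbf{x}\in Z_m^n:\rho(\mathbf{x},\mathbf{a})<m\}$ and $S_U(\mathbf{a},m):=S(\mathbf{a})\setminus U(\mathbf{a},m)$. The first car is parked at $\mathbf{a}(1)=(m,\dots,m)$. Given the most recently parked car $\mathbf{a}(k)$, the next car $\mathbf{a}(k+1)$ is chosen uniformly at random among the points of $S_U(\mathbf{a}(k),m)$ (so each new car is coordinatewise no larger than the previous one and does not overlap the previously parked cars); the process stops (saturation) when no such position exists. All possible parking positions are equally likely at each stage. *)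

theory Defs
  imports "HOL-Probability.Probability"
begin

text \<open>Points of Z_m^n are represented as lists of naturals of length n
  (coordinate j is the list entry at index j, j < n).\<close>

definition Zm :: "nat \<Rightarrow> nat \<Rightarrow> nat list set" where
  "Zm m n = {a. length a = n \<and> (\<forall>j<n. a ! j \<le> m)}"

definition rho :: "nat list \<Rightarrow> nat list \<Rightarrow> nat" where
  "rho x y = Max (insert 0 {nat \<bar>int (x ! j) - int (y ! j)\<bar> | j. j < length x})"

definition Sbox :: "nat \<Rightarrow> nat \<Rightarrow> nat list \<Rightarrow> nat list set" where
  "Sbox m n a = {x \<in> Zm m n. \<forall>j<n. x ! j \<le> a ! j}"

definition Uball :: "nat \<Rightarrow> nat \<Rightarrow> nat list \<Rightarrow> nat list set" where
  "Uball m n a = {x \<in> Zm m n. rho x a < m}"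

definition SU :: "nat \<Rightarrow> nat \<Rightarrow> nat list \<Rightarrow> nat list set" where
  "SU m n a = Sbox m n a - Uball m n a"

lemma finite_Zm: "finite (Zm m n)"
proof -
  have "Zm m n \<subseteq> {xs. set xs \<subseteq> {0..m} \<and> length xs = n}"
    by (auto simp: Zm_def in_set_conv_nth)
  moreover have "finite {xs. set xs \<subseteq> {0..m} \<and> length xs = n}"
    by (rule finite_lists_length_eq) simp
  ultimately show ?thesis by (rule finite_subset)
qed

lemma finite_SU: "finite (SU m n a)"
  using finite_Zm by (auto simp: SU_def Sbox_def intro: finite_subset)

lemma SU_sum_less:
  assumes "a \<in> Zm m n" "m \<noteq> 0" "x \<in> SU m n a"
  shows "sum_list x < sum_list a"
proof -
  have lx: "length x = n" and la: "length a = n" and le: "\<forall>j<n. x ! j \<le> a ! j"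
    and r: "\<not> rho x a < m"
    using assms by (auto simp: SU_def Sbox_def Uball_def Zm_def)
  have "\<exists>j<n. x ! j \<noteq> a ! j"
  proof (rule ccontr)
    assume "\<not> ?thesis"
    then have "{nat \<bar>int (x ! j) - int (a ! j)\<bar> | j. j < length x} \<subseteq> {0}"
      using lx by auto
    then have "rho x a = 0" unfolding rho_def
      by (metis (no_types, lifting) Max_singleton insert_absorb2 subset_singletonD
          insert_absorb singletonI)
    with r assms(2) show False by simp
  qed
  then obtain j where j: "j < n" "x ! j < a ! j" using le by force
  have "sum_list x = (\<Sum>i<n. x ! i)" using lx by (simp add: sum_list_sum_nth atLeast0LessThan)
  also have "\<dots> < (\<Sum>i<n. a ! i)"
    by (rule sum_strict_mono_ex1) (use le j in auto)
  also have "\<dots> = sum_list a" using la by (simp add: sum_list_sum_nth atLeast0LessThan)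
  finally show ?thesis .
qed

text \<open>Distribution of the number of cars parked after the car at position a
  until saturation: if S_U(a,m) is empty the process stops; otherwise the next car
  is uniform on S_U(a,m). (The guards a \<notin> Z_m^n and m = 0 are irrelevant for the
  stated theorem and only ensure totality.)\<close>
function parkY :: "nat \<Rightarrow> nat \<Rightarrow> nat list \<Rightarrow> nat pmf" where
  "parkY m n a =
     (if a \<notin> Zm m n \<or> m = 0 \<or> SU m n a = {} then return_pmf 0
      else pmf_of_set (SU m n a) \<bind> (\<lambda>x. map_pmf Suc (parkY m n x)))"
  by auto
termination
proof (relation "Wellfounded.measure (\<lambda>(m, n, a). sum_list a)")
  fix m n a x
  assume "\<not> (a \<notin> Zm m n \<or> m = 0 \<or> SU m n a = {})" "x \<in> set_pmf (pmf_of_set (SU m n a))"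
  then show "((m, n, x), m, n, a) \<in> Wellfounded.measure (\<lambda>(m, n, a). sum_list a)"
    using SU_sum_less[of a m n x] finite_SU[of m n a] by auto
qed simp

definition Y :: "nat \<Rightarrow> nat \<Rightarrow> nat pmf" where
  "Y m n = parkY m n (replicate n m)"

end

theory Submission
  imports Defs
begin

fun box :: "nat list \<Rightarrow> nat list set" where
  "box [] = {[]}"
| "box (x#xs) = (\<lambda>(a,l). a#l) ` ({0..x} \<times> box xs)"

fun box2 :: "nat \<Rightarrow> nat list \<Rightarrow> nat list set" where
  "box2 m [] = {[]}"
| "box2 m (x#xs) = (\<lambda>(a,l). a#l) ` ((if x = m then {1..x} else {0..x}) \<times> box2 m xs)"

fun cnt :: "nat \<Rightarrow> nat list \<Rightarrow> nat" where
  "cnt m [] = 0"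
| "cnt m (x#xs) = (if x = m then 1 else 0) + cnt m xs"

fun Pf :: "nat \<Rightarrow> nat list \<Rightarrow> real" where
  "Pf m [] = 1"
| "Pf m (x#xs) = (if x = m then 1 else real x + 1) * Pf m xs"

fun Qf :: "real \<Rightarrow> nat \<Rightarrow> (nat \<Rightarrow> real) \<Rightarrow> real" where
  "Qf b 0 G = G 0"
| "Qf b (Suc c) G = Qf b c (\<lambda>k. G (Suc k)) + b * Qf b c G"

lemma box_eq: "box x = {y. length y = length x \<and> (\<forall>j<length x. y!j \<le> x!j)}"
proof (induction x)
  case Nil then show ?case by auto
next
  case (Cons a x)
  show ?case
  proof (intro set_eqI iffI)
    fix y assume "y \<in> box (a#x)"
    then show "y \<in> {y. length y = length (a#x) \<and> (\<forall>j<length (a#x). y!j \<le> (a#x)!j)}"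
      using Cons by (auto simp: nth_Cons split: nat.splits)
  next
    fix y assume y: "y \<in> {y. length y = length (a#x) \<and> (\<forall>j<length (a#x). y!j \<le> (a#x)!j)}"
    then obtain b l where bl: "y = b#l" by (cases y) auto
    have "b \<le> a" using y bl by force
    moreover have "l \<in> box x" using y bl Cons by force
    ultimately show "y \<in> box (a#x)" using bl by force
  qed
qed

lemma box2_eq: "box2 m x = {y. length y = length x \<and> (\<forall>j<length x. y!j \<le> x!j \<and> (x!j = m \<longrightarrow> y!j \<noteq> 0))}"
proof (induction x)
  case Nil then show ?case by auto
next
  case (Cons a x)
  show ?case
  proof (intro set_eqI iffI)
    fix y assume "y \<in> box2 m (a#x)"
    then show "y \<in> {y. length y = length (a#x) \<and> (\<forall>j<length (a#x). y!j \<le> (a#x)!j \<and> ((a#x)!j = m \<longrightarrow> y!j \<noteq> 0))}"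
      using Cons by (auto simp: nth_Cons split: nat.splits if_splits)
  next
    fix y assume y: "y \<in> {y. length y = length (a#x) \<and> (\<forall>j<length (a#x). y!j \<le> (a#x)!j \<and> ((a#x)!j = m \<longrightarrow> y!j \<noteq> 0))}"
    then obtain b l where bl: "y = b#l" by (cases y) auto
    have "b \<le> a" "a = m \<longrightarrow> b \<noteq> 0" using y bl by force+
    moreover have "l \<in> box2 m x" using y bl Cons by force
    ultimately show "y \<in> box2 m (a#x)" using bl by force
  qed
qed

lemma finite_box: "finite (box x)" by (induction x) auto
lemma finite_box2: "finite (box2 m x)" by (induction x) auto

lemma sum_cons_image:
  "(\<Sum>y\<in>(\<lambda>(a,l). a#l) ` (A \<times> B). F y) = (\<Sum>a\<in>A. \<Sum>l\<in>B. F (a#l))"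
proof -
  have "inj_on (\<lambda>(a,l). a#l) (A \<times> B)" by (auto simp: inj_on_def)
  then have "(\<Sum>y\<in>(\<lambda>(a,l). a#l) ` (A \<times> B). F y) = (\<Sum>(a,l)\<in>A \<times> B. F (a#l))"
    by (simp add: sum.reindex case_prod_beta')
  then show ?thesis by (simp add: sum.cartesian_product)
qed

lemma box_sum:
  "(\<forall>v\<in>set x. v \<le> m) \<Longrightarrow> (\<Sum>y\<in>box x. G (cnt m y)) = Pf m x * Qf (real m) (cnt m x) G"
proof (induction x arbitrary: G)
  case Nil then show ?case by simp
next
  case (Cons a x)
  then have IH: "\<And>G. (\<Sum>y\<in>box x. G (cnt m y)) = Pf m x * Qf (real m) (cnt m x) G" by auto
  show ?case
  proof (cases "a = m")
    case True
    have "{0..m} = insert m {0..<m}" by auto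
    then have "(\<Sum>y\<in>box (a#x). G (cnt m y)) = (\<Sum>l\<in>box x. G (Suc (cnt m l))) + (\<Sum>b\<in>{0..<m}. \<Sum>l\<in>box x. G (cnt m l))"
      using True by (simp add: sum_cons_image)
    also have "\<dots> = Pf m x * Qf (real m) (cnt m x) (\<lambda>k. G (Suc k)) + real m * (Pf m x * Qf (real m) (cnt m x) G)"
      using IH[of "\<lambda>k. G (Suc k)"] IH[of G] by simp
    finally show ?thesis using True by (simp add: algebra_simps)
  next
    case False
    then have "(\<Sum>y\<in>box (a#x). G (cnt m y)) = (\<Sum>b\<in>{0..a}. \<Sum>l\<in>box x. G (cnt m l))"
      using Cons.prems by (simp add: sum_cons_image)
    also have "\<dots> = (real a + 1) * (Pf m x * Qf (real m) (cnt m x) G)"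
      using IH[of G] by simp
    finally show ?thesis using False by (simp add: algebra_simps)
  qed
qed

lemma box2_sum:
  "(\<forall>v\<in>set x. v \<le> m) \<Longrightarrow> m \<ge> 1 \<Longrightarrow> (\<Sum>y\<in>box2 m x. G (cnt m y)) = Pf m x * Qf (real m - 1) (cnt m x) G"
proof (induction x arbitrary: G)
  case Nil then show ?case by simp
next
  case (Cons a x)
  then have IH: "\<And>G. (\<Sum>y\<in>box2 m x. G (cnt m y)) = Pf m x * Qf (real m - 1) (cnt m x) G" by auto
  show ?case
  proof (cases "a = m")
    case True
    have "{1..m} = insert m {1..<m}" using Cons.prems by auto
    then have "(\<Sum>y\<in>box2 m (a#x). G (cnt m y)) = (\<Sum>l\<in>box2 m x. G (Suc (cnt m l))) + (\<Sum>b\<in>{1..<m}. \<Sum>l\<in>box2 m x. G (cnt m l))"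
      using True by (simp add: sum_cons_image)
    also have "\<dots> = Pf m x * Qf (real m - 1) (cnt m x) (\<lambda>k. G (Suc k)) + (real m - 1) * (Pf m x * Qf (real m - 1) (cnt m x) G)"
      using IH[of "\<lambda>k. G (Suc k)"] IH[of G] Cons.prems by (simp add: of_nat_diff)
    finally show ?thesis using True by (simp add: algebra_simps)
  next
    case False
    then have "(\<Sum>y\<in>box2 m (a#x). G (cnt m y)) = (\<Sum>b\<in>{0..a}. \<Sum>l\<in>box2 m x. G (cnt m l))"
      using Cons.prems by (simp add: sum_cons_image)
    also have "\<dots> = (real a + 1) * (Pf m x * Qf (real m - 1) (cnt m x) G)"
      using IH[of G] by simp
    finally show ?thesis using False by (simp add: algebra_simps)
  qed
qed

lemma Qf_closed: "Qf b c G = (\<Sum>k=0..c. real (c choose k) * b ^ k * G (c - k))"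
proof (induction c arbitrary: G)
  case 0 then show ?case by simp
next
  case (Suc c)
  have "(\<Sum>k=0..Suc c. real (Suc c choose k) * b ^ k * G (Suc c - k))
     = G (Suc c) + (\<Sum>k=0..c. real (Suc c choose Suc k) * b ^ Suc k * G (c - k))"
    by (subst sum.atLeast0_atMost_Suc_shift) simp
  also have "\<dots> = G (Suc c) + (\<Sum>k=0..c. real (c choose Suc k) * b ^ Suc k * G (c - k))
       + (\<Sum>k=0..c. real (c choose k) * b ^ Suc k * G (c - k))"
    by (simp add: algebra_simps sum.distrib)
  also have "G (Suc c) + (\<Sum>k=0..c. real (c choose Suc k) * b ^ Suc k * G (c - k))
      = (\<Sum>k=0..Suc c. real (c choose k) * b ^ k * G (Suc c - k))"
    using sum.atLeast0_atMost_Suc_shift[of "\<lambda>k. real (c choose k) * b ^ k * G (Suc c - k)" c] by simp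
  also have "\<dots> = (\<Sum>k=0..c. real (c choose k) * b ^ k * G (Suc c - k))"
    by simp
  finally show ?case using Suc[of G] Suc[of "\<lambda>k. G (Suc k)"]
    by (simp add: sum_distrib_left algebra_simps Suc_diff_le)
qed

lemma Qf_one: "Qf b c (\<lambda>_. 1) = (b + 1) ^ c"
  by (induction c) (simp_all add: algebra_simps)

lemma Zm_set: "x \<in> Zm m n \<Longrightarrow> (\<forall>v\<in>set x. v \<le> m) \<and> length x = n"
  by (auto simp: Zm_def in_set_conv_nth)

lemma Sbox_box: "x \<in> Zm m n \<Longrightarrow> Sbox m n x = box x"
  unfolding Sbox_def box_eq Zm_def by (auto intro: order_trans)

lemma rho_less:
  assumes "m > 0"
  shows "rho y x < m \<longleftrightarrow> (\<forall>j<length y. nat \<bar>int (y!j) - int (x!j)\<bar> < m)"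
proof -
  have fin: "finite {nat \<bar>int (y ! j) - int (x ! j)\<bar> | j. j < length y}"
    by (simp add: setcompr_eq_image)
  show ?thesis unfolding rho_def
    using assms by (subst Max_less_iff) (use fin in auto)
qed

lemma SU_box:
  assumes "x \<in> Zm m n" "m \<ge> 1"
  shows "SU m n x = box x - box2 m x" and "box2 m x \<subseteq> box x"
proof -
  have lx: "length x = n" and xm: "\<forall>j<n. x!j \<le> m" using assms by (auto simp: Zm_def)
  have "Sbox m n x \<inter> Uball m n x = box2 m x"
  proof (intro set_eqI iffI)
    fix y assume y: "y \<in> Sbox m n x \<inter> Uball m n x"
    then have ly: "length y = n" and le: "\<forall>j<n. y!j \<le> x!j" and r: "rho y x < m"
      by (auto simp: Sbox_def Uball_def Zm_def)
    from r assms(2) ly have "\<forall>j<n. nat \<bar>int (y!j) - int (x!j)\<bar> < m" by (simp add: rho_less)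
    then show "y \<in> box2 m x" using ly lx le unfolding box2_eq by force
  next
    fix y assume "y \<in> box2 m x"
    then have ly: "length y = n" and le: "\<forall>j<n. y!j \<le> x!j" and nz: "\<forall>j<n. x!j = m \<longrightarrow> y!j \<noteq> 0"
      using lx unfolding box2_eq by auto
    have "\<forall>j<n. nat \<bar>int (y!j) - int (x!j)\<bar> < m"
    proof (intro allI impI)
      fix j assume j: "j < n"
      show "nat \<bar>int (y!j) - int (x!j)\<bar> < m"
        using le[rule_format, OF j] xm[rule_format, OF j] nz[rule_format, OF j] assms(2)
        by (cases "x!j = m") auto
    qed
    then have "rho y x < m" using assms(2) ly by (simp add: rho_less)
    moreover have "y \<in> Zm m n" using ly le xm by (auto simp: Zm_def intro: order_trans)
    ultimately show "y \<in> Sbox m n x \<inter> Uball m n x" using le by (auto simp: Sbox_def Uball_def)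
  qed
  moreover have "Sbox m n x = box x" using assms(1) by (rule Sbox_box)
  ultimately show "SU m n x = box x - box2 m x" unfolding SU_def by blast
  show "box2 m x \<subseteq> box x" unfolding box_eq box2_eq by auto
qed

lemma sum_SU:
  assumes "x \<in> Zm m n" "m \<ge> 1"
  shows "(\<Sum>y\<in>SU m n x. G (cnt m y)) = Pf m x * (Qf (real m) (cnt m x) G - Qf (real m - 1) (cnt m x) G)"
proof -
  have s: "\<forall>v\<in>set x. v \<le> m" using Zm_set[OF assms(1)] by blast
  show ?thesis
    using SU_box[OF assms] box_sum[OF s, of G] box2_sum[OF s assms(2), of G] finite_box[of x]
    by (simp add: sum_diff algebra_simps)
qed

lemma card_SU:
  assumes "x \<in> Zm m n" "m \<ge> 1"
  shows "real (card (SU m n x)) = Pf m x * (Qf (real m) (cnt m x) (\<lambda>_. 1) - Qf (real m - 1) (cnt m x) (\<lambda>_. 1))"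
  using sum_SU[OF assms, of "\<lambda>_. 1"] by simp

lemma Pf_pos: "Pf m x > 0" by (induction x) auto
lemma Pf_rep: "Pf m (replicate c m) = 1" by (induction c) auto
lemma cnt_rep: "cnt m (replicate c m) = c" by (induction c) auto
lemma rep_Zm: "replicate c m \<in> Zm m c" by (auto simp: Zm_def)
lemma sum_cnt_le: "m * cnt m x \<le> sum_list x" by (induction x) (auto simp: algebra_simps)

lemma finite_parkY: "finite (set_pmf (parkY m n a))"
proof (induction m n a rule: parkY.induct)
  case (1 m n a)
  show ?case
  proof (cases "a \<notin> Zm m n \<or> m = 0 \<or> SU m n a = {}")
    case True then show ?thesis by (subst parkY.simps) simp
  next
    case False
    then show ?thesis using 1[OF False] finite_SU[of m n a]
      by (subst parkY.simps) (simp add: set_bind_pmf)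
  qed
qed


lemma key:
  assumes "m \<ge> 1" "x \<in> Zm m n"
  shows "parkY m n x = Y m (cnt m x)"
  using assms(2)
proof (induction "sum_list x" arbitrary: n x rule: less_induct)
  case less
  define c where "c = cnt m x"
  define r where "r = replicate c m"
  have rZ: "r \<in> Zm m c" unfolding r_def by (rule rep_Zm)
  have Pr: "Pf m r = 1" "cnt m r = c" unfolding r_def by (simp_all add: Pf_rep cnt_rep)
  have sumrel: "\<And>G. (\<Sum>y\<in>SU m n x. G (cnt m y)) = Pf m x * (\<Sum>z\<in>SU m c r. G (cnt m z))"
    using sum_SU[OF less.prems assms(1)] sum_SU[OF rZ assms(1)] Pr c_def by simp
  have cardrel: "real (card (SU m n x)) = Pf m x * real (card (SU m c r))"
    using sumrel[of "\<lambda>_. 1"] by simp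
  have Pp: "Pf m x > 0" by (rule Pf_pos)
  have empt: "SU m n x = {} \<longleftrightarrow> SU m c r = {}"
    using cardrel Pp finite_SU[of m n x] finite_SU[of m c r] by auto
  have Yc: "Y m c = parkY m c r" unfolding Y_def r_def ..
  show ?case
  proof (cases "SU m n x = {}")
    case True
    then show ?thesis unfolding c_def[symmetric] Yc using empt
      by (subst (1 2) parkY.simps) simp
  next
    case False
    have ne: "SU m c r \<noteq> {}" using False empt by simp
    have m0: "m \<noteq> 0" using assms(1) by simp
    have lhs: "parkY m n x = pmf_of_set (SU m n x) \<bind> (\<lambda>y. map_pmf Suc (Y m (cnt m y)))"
    proof -
      have "parkY m n x = pmf_of_set (SU m n x) \<bind> (\<lambda>y. map_pmf Suc (parkY m n y))"
        using False less.prems m0 by (subst parkY.simps) simp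
      also have "\<dots> = pmf_of_set (SU m n x) \<bind> (\<lambda>y. map_pmf Suc (Y m (cnt m y)))"
      proof (rule bind_pmf_cong[OF refl])
        fix y assume "y \<in> set_pmf (pmf_of_set (SU m n x))"
        then have y: "y \<in> SU m n x" using False finite_SU[of m n x] by simp
        then have "y \<in> Zm m n" by (auto simp: SU_def Sbox_def)
        moreover have "sum_list y < sum_list x" using SU_sum_less[OF less.prems m0 y] .
        ultimately show "map_pmf Suc (parkY m n y) = map_pmf Suc (Y m (cnt m y))"
          using less.hyps by simp
      qed
      finally show ?thesis .
    qed
    have rhs: "Y m c = pmf_of_set (SU m c r) \<bind> (\<lambda>y. map_pmf Suc (Y m (cnt m y)))"
    proof -
      have "Y m c = pmf_of_set (SU m c r) \<bind> (\<lambda>y. map_pmf Suc (parkY m c y))"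
        unfolding Yc using ne rZ m0 by (subst parkY.simps) simp
      also have "\<dots> = pmf_of_set (SU m c r) \<bind> (\<lambda>y. map_pmf Suc (Y m (cnt m y)))"
      proof (rule bind_pmf_cong[OF refl])
        fix y assume "y \<in> set_pmf (pmf_of_set (SU m c r))"
        then have y: "y \<in> SU m c r" using ne finite_SU[of m c r] by simp
        then have "y \<in> Zm m c" by (auto simp: SU_def Sbox_def)
        moreover have "sum_list y < sum_list x"
        proof -
          have "sum_list y < sum_list r" using SU_sum_less[OF rZ m0 y] .
          also have "sum_list r = m * c" unfolding r_def by (simp add: sum_list_replicate)
          also have "\<dots> \<le> sum_list x" unfolding c_def using sum_cnt_le[of m x] by (simp add: mult.commute)
          finally show ?thesis .
        qed
        ultimately show "map_pmf Suc (parkY m c y) = map_pmf Suc (Y m (cnt m y))"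
          using less.hyps by simp
      qed
      finally show ?thesis .
    qed
    show ?thesis unfolding lhs c_def[symmetric] rhs
    proof (rule pmf_eqI)
      fix v
      let ?G = "\<lambda>k. pmf (map_pmf Suc (Y m k)) v"
      have "pmf (pmf_of_set (SU m n x) \<bind> (\<lambda>y. map_pmf Suc (Y m (cnt m y)))) v
          = (\<Sum>y\<in>SU m n x. ?G (cnt m y)) / real (card (SU m n x))"
        using False finite_SU[of m n x] by (simp add: pmf_bind_pmf_of_set)
      also have "\<dots> = (Pf m x * (\<Sum>z\<in>SU m c r. ?G (cnt m z))) / (Pf m x * real (card (SU m c r)))"
        using sumrel[of ?G] cardrel by simp
      also have "\<dots> = (\<Sum>z\<in>SU m c r. ?G (cnt m z)) / real (card (SU m c r))"
        using Pp by simp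
      also have "\<dots> = pmf (pmf_of_set (SU m c r) \<bind> (\<lambda>y. map_pmf Suc (Y m (cnt m y)))) v"
        using ne finite_SU[of m c r] by (simp add: pmf_bind_pmf_of_set)
      finally show "pmf (pmf_of_set (SU m n x) \<bind> (\<lambda>y. map_pmf Suc (Y m (cnt m y)))) v
          = pmf (pmf_of_set (SU m c r) \<bind> (\<lambda>y. map_pmf Suc (Y m (cnt m y)))) v" .
    qed
  qed
qed


theorem mainTheorem1:
  fixes m n :: nat and u :: real
  assumes "m \<ge> 1" and "n \<ge> 1"
  shows "measure_pmf.expectation (Y m n) (\<lambda>k. u ^ k) =
    u * (\<Sum>k = 1..n. real (n choose k) *
          ((real m ^ k - real (m - 1) ^ k) / ((real m + 1) ^ n - real m ^ n)) *
          measure_pmf.expectation (Y m (n - k)) (\<lambda>j. u ^ j))"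
proof -
  define a where "a = replicate n m"
  define E where "E k = measure_pmf.expectation (Y m k) (\<lambda>j. u ^ j)" for k
  define G where "G k = u * E k" for k
  define D where "D = (real m + 1) ^ n - real m ^ n"
  have aZ: "a \<in> Zm m n" unfolding a_def by (rule rep_Zm)
  have Pa: "Pf m a = 1" "cnt m a = n" unfolding a_def by (simp_all add: Pf_rep cnt_rep)
  have m0: "m \<noteq> 0" using assms(1) by simp
  have rm: "real (m - 1) = real m - 1" using assms(1) by (simp add: of_nat_diff)
  have cardD: "real (card (SU m n a)) = D"
    using card_SU[OF aZ assms(1)] Pa by (simp add: Qf_one D_def)
  have "real m ^ n < (real m + 1) ^ n" using assms(2) by (intro power_strict_mono) auto
  then have Dpos: "D > 0" unfolding D_def by simp
  have ne: "SU m n a \<noteq> {}" using cardD Dpos by auto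
  have fin: "finite (SU m n a)" by (rule finite_SU)
  have Yeq: "Y m n = pmf_of_set (SU m n a) \<bind> (\<lambda>y. map_pmf Suc (Y m (cnt m y)))"
  proof -
    have "Y m n = pmf_of_set (SU m n a) \<bind> (\<lambda>y. map_pmf Suc (parkY m n y))"
      unfolding Y_def a_def[symmetric] using ne aZ m0 by (subst parkY.simps) simp
    also have "\<dots> = pmf_of_set (SU m n a) \<bind> (\<lambda>y. map_pmf Suc (Y m (cnt m y)))"
    proof (rule bind_pmf_cong[OF refl])
      fix y assume "y \<in> set_pmf (pmf_of_set (SU m n a))"
      then have "y \<in> SU m n a" using ne fin by simp
      then have "y \<in> Zm m n" by (auto simp: SU_def Sbox_def)
      then show "map_pmf Suc (parkY m n y) = map_pmf Suc (Y m (cnt m y))"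
        using key[OF assms(1)] by simp
    qed
    finally show ?thesis .
  qed
  have "measure_pmf.expectation (Y m n) (\<lambda>k. u ^ k)
      = (\<Sum>y\<in>SU m n a. measure_pmf.expectation (map_pmf Suc (Y m (cnt m y))) (\<lambda>k. u ^ k) /\<^sub>R real (card (SU m n a)))"
    unfolding Yeq using ne fin
    by (intro pmf_expectation_bind_pmf_of_set) (simp_all add: Y_def finite_parkY del: parkY.simps)
  also have "\<dots> = (\<Sum>y\<in>SU m n a. G (cnt m y)) / D"
    unfolding sum_divide_distrib
  proof (rule sum.cong[OF refl])
    fix y
    have "measure_pmf.expectation (map_pmf Suc (Y m (cnt m y))) (\<lambda>k. u ^ k)
        = measure_pmf.expectation (Y m (cnt m y)) (\<lambda>k. u * u ^ k)" by simp
    also have "\<dots> = G (cnt m y)" unfolding G_def E_def by (rule integral_mult_right_zero)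
    finally show "measure_pmf.expectation (map_pmf Suc (Y m (cnt m y))) (\<lambda>k. u ^ k) /\<^sub>R real (card (SU m n a)) = G (cnt m y) / D"
      using cardD by (simp add: divide_inverse_commute)
  qed
  also have "(\<Sum>y\<in>SU m n a. G (cnt m y)) = Qf (real m) n G - Qf (real m - 1) n G"
    using sum_SU[OF aZ assms(1), of G] Pa by simp
  also have "\<dots> = (\<Sum>k=0..n. real (n choose k) * (real m ^ k - (real m - 1) ^ k) * G (n - k))"
    by (simp add: Qf_closed sum_subtractf[symmetric] algebra_simps)
  also have "\<dots> = (\<Sum>k=1..n. real (n choose k) * (real m ^ k - (real m - 1) ^ k) * G (n - k))"
    by (simp add: sum.atLeast_Suc_atMost)
  finally show ?thesis
    using rm by (simp add: rm G_def E_def D_def sum_divide_distrib sum_distrib_left algebra_simps)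
qed

end
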